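(* Let $L\ge 2$, let $\Omega\subsetneq\mathbb{Z}_L$ with $|\Omega|=n$, and let $\mathcal{C}=\{C_0,\dots,C_{M-1}\}$ be a set of $M$ complex sequences of length $L$ such that every $C_j$ satisfies the spectral constraint: its frequency-domain dual $\widehat{C}_j=(\hat c_{j,0},\dots,\hat c_{j,L-1})$ satisfies $|\hat c_{j,k}|^2=\frac{L}{L-n}$ for $k\notin\Omega$ and $\hat c_{j,k}=0$ for $k\in\Omega$. Define $\theta_a=\max\{|\theta_{C_i}(\tau)|:0\le i<M,\ 0<\tau<L\}$ and, when $M\ge 2$, $\theta_c=\max\{|\theta_{C_i,C_j}(\tau)|:0\le i\ne j<M,\ 0\le\tau<L\}$. Then $$\theta_a\ge L\sqrt{\frac{n}{(L-n)(L-1)}},\qquad \theta_c\ge \frac{L}{\sqrt{L-n}}.$$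
   Context: $\omega_L=e^{2\pi\sqrt{-1}/L}$. For a length-$L$ sequence $C=(c_0,\dots,c_{L-1})$ its frequency-domain dual is $\widehat C=(\hat c_0,\dots,\hat c_{L-1})$ with $\hat c_k=\frac{1}{\sqrt L}\sum_{t=0}^{L-1}c_t\omega_L^{-tk}$. The periodic cross-correlation of length-$L$ sequences $C,D$ is $\theta_{C,D}(\tau)=\sum_{t=0}^{L-1}c_t d^*_{\langle t+\tau\rangle_L}$, where $\langle\cdot\rangle_L$ is reduction mod $L$ and $^*$ is complex conjugation; $\theta_C=\theta_{C,C}$. *)

theory Defs
  imports Complex_Main
begin

text \<open>Sequences of length L are functions nat \<Rightarrow> complex; only indices 0..L-1 matter.\<close>

definition omega :: "nat \<Rightarrow> complex" where
  "omega L = exp (2 * of_real pi * \<i> / of_nat L)"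

definition dual :: "nat \<Rightarrow> (nat \<Rightarrow> complex) \<Rightarrow> nat \<Rightarrow> complex" where
  "dual L c k = (1 / of_real (sqrt (real L))) *
      (\<Sum>t<L. c t * inverse (omega L ^ (t * k)))"

definition pcorr :: "nat \<Rightarrow> (nat \<Rightarrow> complex) \<Rightarrow> (nat \<Rightarrow> complex) \<Rightarrow> nat \<Rightarrow> complex" where
  "pcorr L c d \<tau> = (\<Sum>t<L. c t * cnj (d ((t + \<tau>) mod L)))"

definition theta_a :: "nat \<Rightarrow> nat \<Rightarrow> (nat \<Rightarrow> nat \<Rightarrow> complex) \<Rightarrow> real" where
  "theta_a L M C = Max {cmod (pcorr L (C i) (C i) \<tau>) | i \<tau>. i < M \<and> 0 < \<tau> \<and> \<tau> < L}"

definition theta_c :: "nat \<Rightarrow> nat \<Rightarrow> (nat \<Rightarrow> nat \<Rightarrow> complex) \<Rightarrow> real" where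
  "theta_c L M C = Max {cmod (pcorr L (C i) (C j) \<tau>) | i j \<tau>. i < M \<and> j < M \<and> i \<noteq> j \<and> \<tau> < L}"

text \<open>Sequence truncated to its length-L support (to compare sequences as length-L objects).\<close>
definition seq_trunc :: "nat \<Rightarrow> (nat \<Rightarrow> complex) \<Rightarrow> nat \<Rightarrow> complex" where
  "seq_trunc L c t = (if t < L then c t else 0)"

definition spectral_constraint :: "nat \<Rightarrow> nat set \<Rightarrow> (nat \<Rightarrow> complex) \<Rightarrow> bool" where
  "spectral_constraint L \<Omega> c \<longleftrightarrow>
     (\<forall>k<L. (k \<in> \<Omega> \<longrightarrow> dual L c k = 0) \<and>
            (k \<notin> \<Omega> \<longrightarrow> (cmod (dual L c k))^2 = real L / (real L - real (card \<Omega>))))"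

end

theory Submission
  imports Defs "HOL-Library.Real_Mod"
begin

definition ee :: "nat \<Rightarrow> int \<Rightarrow> complex" where
  "ee L m = cis (2 * pi * of_int m / real L)"

lemma ee_add: "ee L (a + b) = ee L a * ee L b"
  unfolding ee_def by (simp add: cis_mult add_divide_distrib distrib_left)

lemma ee_cnj: "cnj (ee L a) = ee L (- a)"
  unfolding ee_def by (simp add: cis_cnj)

lemma ee_pow: "ee L m ^ k = ee L (int k * m)"
  unfolding ee_def by (simp add: DeMoivre mult_ac)

lemma ee_dvd: "L > 0 \<Longrightarrow> int L dvd m \<Longrightarrow> ee L m = 1"
proof -
  assume L: "L > 0" and "int L dvd m"
  then obtain q where q: "m = int L * q" by blast
  have "2 * pi * of_int m / real L = 2 * pi * of_int q" using L by (simp add: q)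
  then show ?thesis unfolding ee_def by simp
qed

lemma ee_ndvd: "L > 0 \<Longrightarrow> \<not> int L dvd m \<Longrightarrow> ee L m \<noteq> 1"
proof
  assume L: "L > 0" and nd: "\<not> int L dvd m" and e: "ee L m = 1"
  then obtain n where n: "2 * pi * of_int m / real L = of_int n * (2 * pi)"
    unfolding ee_def cis_eq_1_iff by blast
  then have "real_of_int m = of_int n * real L" using L by (simp add: field_simps)
  then have "m = n * int L" by (metis of_int_eq_iff of_int_mult of_int_of_nat_eq)
  then show False using nd by simp
qed

lemma ortho: "L > 0 \<Longrightarrow> (\<Sum>k<L. ee L (int k * m)) = (if int L dvd m then of_nat L else 0)"
proof -
  assume L: "L > 0"
  have "(\<Sum>k<L. ee L (int k * m)) = (\<Sum>k<L. ee L m ^ k)" by (simp add: ee_pow)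
  also have "\<dots> = (if int L dvd m then of_nat L else 0)"
  proof (cases "int L dvd m")
    case True then show ?thesis using L by (simp add: ee_dvd)
  next
    case False
    have "ee L m ^ L = 1" using L by (simp add: ee_pow ee_dvd)
    then show ?thesis using False ee_ndvd[OF L False] by (simp add: sum_gp_strict)
  qed
  finally show ?thesis .
qed

lemma omega_pow: "inverse (omega L ^ (t * k)) = ee L (- (int t * int k))"
  unfolding omega_def ee_def
proof -
  have "exp (2 * complex_of_real pi * \<i> / complex_of_real (real L)) = cis (2 * pi / real L)"
    by (simp add: cis_conv_exp mult_ac)
  then show "inverse (exp (2 * complex_of_real pi * \<i> / of_nat L) ^ (t * k)) =
    cis (2 * pi * real_of_int (- (int t * int k)) / real L)"
    by (simp add: DeMoivre mult_ac)
qed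

lemma ee3: "a + b + c = d \<Longrightarrow> ee L a * ee L b * ee L c = ee L d"
  by (simp add: ee_add[symmetric])

lemma dual_ee: "dual L c k = (1 / of_real (sqrt (real L))) * (\<Sum>t<L. c t * ee L (- (int t * int k)))"
  unfolding dual_def omega_pow ..

lemma cnj_dual: "cnj (dual L c k) = (1 / of_real (sqrt (real L))) * (\<Sum>t<L. cnj (c t) * ee L (int t * int k))"
  unfolding dual_ee by (simp add: ee_cnj)

lemma sel: "L > 0 \<Longrightarrow> s < L \<Longrightarrow> (int L dvd (int s - int t - int \<tau>)) = (s = (t + \<tau>) mod L)"
proof -
  assume L: "L > 0" and s: "s < L"
  have "(int L dvd (int s - (int t + int \<tau>))) = (int s mod int L = (int t + int \<tau>) mod int L)"
    by (simp add: mod_eq_dvd_iff)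
  also have "\<dots> = (s = (t + \<tau>) mod L)" using s
    by (metis mod_less of_nat_add of_nat_eq_iff zmod_int)
  finally show ?thesis by (simp add: algebra_simps)
qed

lemma pcorr_dual:
  assumes L: "L > 0"
  shows "pcorr L c d \<tau> = (\<Sum>k<L. dual L c k * cnj (dual L d k) * ee L (- int \<tau> * int k))"
proof -
  have sq: "(1 / complex_of_real (sqrt (real L))) * (1 / complex_of_real (sqrt (real L))) = 1 / of_nat L"
    using L by (simp flip: of_real_mult)
  have "(\<Sum>k<L. dual L c k * cnj (dual L d k) * ee L (- int \<tau> * int k))
     = (\<Sum>k<L. (1 / of_nat L) * (\<Sum>t<L. \<Sum>s<L. c t * cnj (d s) * ee L (int k * (int s - int t - int \<tau>))))"
  proof (rule sum.cong[OF refl])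
    fix k assume "k \<in> {..<L}"
    have "dual L c k * cnj (dual L d k) * ee L (- int \<tau> * int k)
      = ((1 / complex_of_real (sqrt (real L))) * (1 / complex_of_real (sqrt (real L)))) *
         ((\<Sum>t<L. c t * ee L (- (int t * int k))) * (\<Sum>s<L. cnj (d s) * ee L (int s * int k))) * ee L (- int \<tau> * int k)"
      unfolding dual_ee by (simp add: mult_ac ee_cnj)
    also have "\<dots> = (1 / of_nat L) * (\<Sum>t<L. \<Sum>s<L. c t * cnj (d s) * (ee L (- (int t * int k)) * ee L (int s * int k) * ee L (- int \<tau> * int k)))"
      unfolding sq sum_product sum_distrib_right sum_distrib_left by (simp add: mult_ac) (rule sum.swap)
    also have "\<dots> = (1 / of_nat L) * (\<Sum>t<L. \<Sum>s<L. c t * cnj (d s) * ee L (int k * (int s - int t - int \<tau>)))"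
    proof -
      have "\<And>s t. ee L (- (int t * int k)) * ee L (int s * int k) * ee L (- int \<tau> * int k) = ee L (int k * (int s - int t - int \<tau>))"
        by (rule ee3) (simp add: algebra_simps)
      then show ?thesis by (simp only:)
    qed
    finally show "dual L c k * cnj (dual L d k) * ee L (- int \<tau> * int k) = (1 / of_nat L) * (\<Sum>t<L. \<Sum>s<L. c t * cnj (d s) * ee L (int k * (int s - int t - int \<tau>)))" .
  qed
  also have "\<dots> = (1 / of_nat L) * (\<Sum>t<L. \<Sum>s<L. c t * cnj (d s) * (\<Sum>k<L. ee L (int k * (int s - int t - int \<tau>))))"
  proof -
    have A: "(\<Sum>k<L. \<Sum>t<L. \<Sum>s<L. F k t s) = (\<Sum>t<L. \<Sum>s<L. \<Sum>k<L. F k t s)" for F :: "nat \<Rightarrow> nat \<Rightarrow> nat \<Rightarrow> complex"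
      by (subst sum.swap) (rule sum.cong[OF refl], rule sum.swap)
    show ?thesis unfolding sum_distrib_left[symmetric] A by (simp only: sum_distrib_left)
  qed
  also have "\<dots> = (1 / of_nat L) * (\<Sum>t<L. \<Sum>s<L. c t * cnj (d s) * (if s = (t + \<tau>) mod L then of_nat L else 0))"
    using L by (simp add: ortho sel)
  also have "\<dots> = (1 / of_nat L) * (\<Sum>t<L. c t * cnj (d ((t + \<tau>) mod L)) * of_nat L)"
    using L by (simp add: if_distrib sum.delta' cong: if_cong)
  also have "\<dots> = pcorr L c d \<tau>"
    using L by (simp add: pcorr_def sum_distrib_left)
  finally show ?thesis ..
qed

lemma sel2: "L > 0 \<Longrightarrow> k < L \<Longrightarrow> k' < L \<Longrightarrow> (int L dvd (int k' - int k)) = (k' = k)"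
  using sel[of L k' k 0] by simp

lemma parseval:
  assumes L: "L > 0"
  shows "(\<Sum>\<tau><L. (cmod (\<Sum>k<L. a k * ee L (- int \<tau> * int k)))^2) = real L * (\<Sum>k<L. (cmod (a k))^2)"
proof -
  have "complex_of_real (\<Sum>\<tau><L. (cmod (\<Sum>k<L. a k * ee L (- int \<tau> * int k)))^2)
     = (\<Sum>\<tau><L. (\<Sum>k<L. a k * ee L (- int \<tau> * int k)) * cnj (\<Sum>k<L. a k * ee L (- int \<tau> * int k)))"
    by (simp only: of_real_sum complex_norm_square)
  also have "\<dots> = (\<Sum>\<tau><L. \<Sum>k<L. \<Sum>k'<L. a k * cnj (a k') * ee L (int \<tau> * (int k' - int k)))"
  proof (rule sum.cong[OF refl])
    fix \<tau> assume "\<tau> \<in> {..<L}"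
    have e: "\<And>k k'. ee L (- int \<tau> * int k) * ee L (- (- int \<tau> * int k')) = ee L (int \<tau> * (int k' - int k))"
      unfolding ee_add[symmetric] by (rule arg_cong[where f="ee L"]) (simp add: algebra_simps)
    have "(\<Sum>k<L. a k * ee L (- int \<tau> * int k)) * cnj (\<Sum>k<L. a k * ee L (- int \<tau> * int k))
      = (\<Sum>k<L. \<Sum>k'<L. (a k * ee L (- int \<tau> * int k)) * (cnj (a k') * ee L (- (- int \<tau> * int k'))))"
      by (simp only: cnj_sum complex_cnj_mult ee_cnj sum_product)
    also have "\<dots> = (\<Sum>k<L. \<Sum>k'<L. a k * cnj (a k') * (ee L (- int \<tau> * int k) * ee L (- (- int \<tau> * int k'))))"
      by (intro sum.cong refl) (simp add: ac_simps)
    finally show "(\<Sum>k<L. a k * ee L (- int \<tau> * int k)) * cnj (\<Sum>k<L. a k * ee L (- int \<tau> * int k))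
      = (\<Sum>k<L. \<Sum>k'<L. a k * cnj (a k') * ee L (int \<tau> * (int k' - int k)))"
      by (simp only: e)
  qed
  also have "\<dots> = (\<Sum>k<L. \<Sum>k'<L. a k * cnj (a k') * (\<Sum>\<tau><L. ee L (int \<tau> * (int k' - int k))))"
  proof -
    have A: "(\<Sum>k<L. \<Sum>t<L. \<Sum>s<L. F k t s) = (\<Sum>t<L. \<Sum>s<L. \<Sum>k<L. F k t s)" for F :: "nat \<Rightarrow> nat \<Rightarrow> nat \<Rightarrow> complex"
      by (subst sum.swap) (rule sum.cong[OF refl], rule sum.swap)
    show ?thesis by (simp only: sum_distrib_left) (rule A)
  qed
  also have "\<dots> = (\<Sum>k<L. \<Sum>k'<L. a k * cnj (a k') * (if k' = k then of_nat L else 0))"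
    using L by (intro sum.cong refl) (simp add: ortho sel2)
  also have "\<dots> = (\<Sum>k<L. a k * cnj (a k) * of_nat L)"
    by (simp add: if_distrib sum.delta cong: if_cong)
  also have "\<dots> = complex_of_real (real L * (\<Sum>k<L. (cmod (a k))^2))"
    by (simp only: of_real_mult of_real_sum of_real_of_nat_eq complex_norm_square sum_distrib_left mult_ac)
  finally show ?thesis by (simp only: of_real_eq_iff)
qed

lemma sqle: "0 \<le> t \<Longrightarrow> 0 \<le> a \<Longrightarrow> 0 \<le> X \<Longrightarrow> a^2 * X \<le> t^2 \<Longrightarrow> a * sqrt X \<le> t"
  by (rule power2_le_imp_le) (simp_all add: power_mult_distrib)

theorem theorem1:
  fixes L M n :: nat and \<Omega> :: "nat set" and C :: "nat \<Rightarrow> nat \<Rightarrow> complex"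
  assumes "L \<ge> 2"
    and "\<Omega> \<subset> {..<L}"
    and "card \<Omega> = n"
    and "M \<ge> 1"
    and "inj_on (\<lambda>i. seq_trunc L (C i)) {..<M}"
    and "\<forall>j<M. spectral_constraint L \<Omega> (C j)"
  shows "theta_a L M C \<ge> real L * sqrt (real n / ((real L - real n) * (real L - 1))) \<and>
         (M \<ge> 2 \<longrightarrow> theta_c L M C \<ge> real L / sqrt (real L - real n))"
proof -
  have L0: "L > 0" using assms(1) by simp
  have nL: "n < L" using psubset_card_mono[OF finite_lessThan assms(2)] assms(3) by simp
  define v where "v = real L / (real L - real n)"
  have sc: "(cmod (dual L (C j) k))^2 = (if k \<in> \<Omega> then 0 else v)" if "j < M" "k < L" for j k
    using assms(6) assms(3) that unfolding spectral_constraint_def v_def by auto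
  have cnt: "(\<Sum>k<L. if k \<in> \<Omega> then 0 else x) = (real L - real n) * x" for x :: real
  proof -
    have "(\<Sum>k<L. if k \<in> \<Omega> then 0 else x) = (\<Sum>k \<in> {..<L} - \<Omega>. x)"
      by (simp add: sum.If_cases Diff_eq)
    also have "\<dots> = real (card ({..<L} - \<Omega>)) * x" by simp
    also have "card ({..<L} - \<Omega>) = L - n"
      using assms(2,3) by (metis card_Diff_subset card_lessThan finite_lessThan finite_subset psubset_imp_subset)
    finally show ?thesis using nL by simp
  qed
  have key: "(\<Sum>\<tau><L. (cmod (pcorr L (C i) (C j) \<tau>))^2) = real L * ((real L - real n) * v^2)"
    if i: "i < M" and j: "j < M" for i j
  proof -
    have "(\<Sum>\<tau><L. (cmod (pcorr L (C i) (C j) \<tau>))^2) = real L * (\<Sum>k<L. (cmod (dual L (C i) k * cnj (dual L (C j) k)))^2)"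
      using parseval[OF L0, of "\<lambda>k. dual L (C i) k * cnj (dual L (C j) k)"] by (simp add: pcorr_dual[OF L0])
    also have "(\<Sum>k<L. (cmod (dual L (C i) k * cnj (dual L (C j) k)))^2) = (\<Sum>k<L. if k \<in> \<Omega> then 0 else v^2)"
    proof (intro sum.cong refl)
      fix k assume "k \<in> {..<L}"
      then have k: "k < L" by simp
      have eq: "(cmod (dual L (C i) k * cnj (dual L (C j) k)))^2 = (cmod (dual L (C i) k))^2 * (cmod (dual L (C j) k))^2"
        by (simp add: norm_mult power_mult_distrib)
      show "(cmod (dual L (C i) k * cnj (dual L (C j) k)))^2 = (if k \<in> \<Omega> then 0 else v^2)"
        by (simp only: eq sc[OF i k] sc[OF j k]) (simp add: power2_eq_square)
    qed
    finally show ?thesis using cnt by simp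
  qed
  have Lv: "(real L - real n) * v = real L" using nL by (simp add: v_def)
  have M0: "0 < M" using assms(4) by simp
  define P where "P \<tau> = cmod (pcorr L (C 0) (C 0) \<tau>)" for \<tau>
  have "pcorr L (C 0) (C 0) 0 = (\<Sum>k<L. complex_of_real ((cmod (dual L (C 0) k))^2))"
    by (simp add: pcorr_dual[OF L0] ee_def del: of_real_power) (simp only: complex_norm_square)
  also have "\<dots> = complex_of_real (\<Sum>k<L. if k \<in> \<Omega> then 0 else v)"
    unfolding of_real_sum by (intro sum.cong refl) (simp add: sc M0)
  also have "\<dots> = of_real (real L)" by (simp add: cnt Lv)
  finally have P0: "P 0 = real L" by (simp add: P_def)
  define SA where "SA = {cmod (pcorr L (C i) (C i) \<tau>) | i \<tau>. i < M \<and> 0 < \<tau> \<and> \<tau> < L}"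
  have finA: "finite SA"
  proof (rule finite_subset)
    show "SA \<subseteq> (\<lambda>(i, \<tau>). cmod (pcorr L (C i) (C i) \<tau>)) ` ({..<M} \<times> {..<L})"
      unfolding SA_def by auto
  qed simp
  have bndA: "P \<tau> \<le> theta_a L M C" if "0 < \<tau>" "\<tau> < L" for \<tau>
    unfolding theta_a_def SA_def[symmetric] P_def
    by (rule Max_ge[OF finA]) (unfold SA_def, use that M0 in blast)
  have ta0: "0 \<le> theta_a L M C"
  proof -
    have "P 1 \<le> theta_a L M C" using bndA[of 1] assms(1) by simp
    moreover have "0 \<le> P 1" unfolding P_def by simp
    ultimately show ?thesis by linarith
  qed
  have LS: "L = Suc (L - 1)" using L0 by simp
  have "real L * ((real L - real n) * v^2) = (\<Sum>\<tau><L. (P \<tau>)^2)" using key[OF M0 M0] by (simp add: P_def)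
  also have "\<dots> = (P 0)^2 + (\<Sum>i<L - 1. (P (Suc i))^2)"
    by (subst LS) (simp only: sum.lessThan_Suc_shift)
  also have "(\<Sum>i<L - 1. (P (Suc i))^2) \<le> real (card {..<L - 1}) * (theta_a L M C)^2"
    by (rule sum_bounded_above) (use bndA P_def in \<open>auto intro!: power_mono\<close>)
  finally have ineqA: "real L * ((real L - real n) * v^2) \<le> (real L)^2 + (real L - 1) * (theta_a L M C)^2"
    using P0 L0 by (simp add: of_nat_diff)
  have eqA: "real L * ((real L - real n) * v^2) - (real L)^2 = (real L)^2 * real n / (real L - real n)"
  proof -
    have e1: "(real L - real n) * v^2 = real L * v" using Lv by (metis power2_eq_square mult.assoc)
    have e2: "v - 1 = real n / (real L - real n)" using nL by (simp add: v_def field_simps)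
    have "real L * ((real L - real n) * v^2) - (real L)^2 = (real L)^2 * (v - 1)"
      unfolding e1 by (simp add: power2_eq_square algebra_simps)
    then show ?thesis unfolding e2 by simp
  qed
  have A: "real L * sqrt (real n / ((real L - real n) * (real L - 1))) \<le> theta_a L M C"
  proof (rule sqle[OF ta0])
    show "0 \<le> real n / ((real L - real n) * (real L - 1))" using nL L0 by simp
    have "(real L)^2 * real n / (real L - real n) \<le> (real L - 1) * (theta_a L M C)^2"
      using ineqA eqA by linarith
    then show "(real L)^2 * (real n / ((real L - real n) * (real L - 1))) \<le> (theta_a L M C)^2"
    proof -
      have c: "0 < real L - 1" using assms(1) by simp
      have "(real L)^2 * (real n / ((real L - real n) * (real L - 1))) = ((real L)^2 * real n / (real L - real n)) / (real L - 1)"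
        by simp
      also have "\<dots> \<le> (theta_a L M C)^2"
        using \<open>(real L)^2 * real n / (real L - real n) \<le> (real L - 1) * (theta_a L M C)^2\<close> c
        by (subst pos_divide_le_eq[OF c]) (simp only: mult.commute)
      finally show ?thesis .
    qed
  qed simp
  have B: "theta_c L M C \<ge> real L / sqrt (real L - real n)" if M2: "M \<ge> 2"
  proof -
    have M1: "1 < M" using M2 by simp
    define Q where "Q \<tau> = cmod (pcorr L (C 0) (C 1) \<tau>)" for \<tau>
    define SC where "SC = {cmod (pcorr L (C i) (C j) \<tau>) | i j \<tau>. i < M \<and> j < M \<and> i \<noteq> j \<and> \<tau> < L}"
    have finC: "finite SC"
    proof (rule finite_subset)
      show "SC \<subseteq> (\<lambda>(i, j, \<tau>). cmod (pcorr L (C i) (C j) \<tau>)) ` ({..<M} \<times> {..<M} \<times> {..<L})"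
      proof
        fix x assume "x \<in> SC"
        then obtain i j \<tau> where x: "x = cmod (pcorr L (C i) (C j) \<tau>)" "i < M" "j < M" "\<tau> < L"
          unfolding SC_def by blast
        then show "x \<in> (\<lambda>(i, j, \<tau>). cmod (pcorr L (C i) (C j) \<tau>)) ` ({..<M} \<times> {..<M} \<times> {..<L})"
          by (intro image_eqI[of _ _ "(i, j, \<tau>)"]) auto
      qed
    qed simp
    have bndC: "Q \<tau> \<le> theta_c L M C" if "\<tau> < L" for \<tau>
      unfolding theta_c_def SC_def[symmetric] Q_def
      by (rule Max_ge[OF finC]) (unfold SC_def, use that M1 in force)
    have tc0: "0 \<le> theta_c L M C"
    proof -
      have "Q 0 \<le> theta_c L M C" using bndC[of 0] L0 by simp
      moreover have "0 \<le> Q 0" unfolding Q_def by simp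
      ultimately show ?thesis by linarith
    qed
    have "real L * ((real L - real n) * v^2) = (\<Sum>\<tau><L. (Q \<tau>)^2)" using key[OF M0 M1] by (simp add: Q_def)
    also have "\<dots> \<le> real (card {..<L}) * (theta_c L M C)^2"
      by (rule sum_bounded_above) (use bndC Q_def in \<open>auto intro!: power_mono\<close>)
    finally have ineqC: "real L * ((real L - real n) * v^2) \<le> real L * (theta_c L M C)^2" by simp
    have eqC: "real L * ((real L - real n) * v^2) = real L * ((real L)^2 / (real L - real n))"
    proof -
      have e1: "(real L - real n) * v^2 = real L * v" using Lv by (metis power2_eq_square mult.assoc)
      show ?thesis unfolding e1 by (simp add: v_def power2_eq_square)
    qed
    have "(real L)^2 * (1 / (real L - real n)) \<le> (theta_c L M C)^2"
    proof -
      have "real L * ((real L)^2 / (real L - real n)) \<le> real L * (theta_c L M C)^2"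
        using ineqC unfolding eqC .
      then have "(real L)^2 / (real L - real n) \<le> (theta_c L M C)^2"
        by (rule mult_left_le_imp_le) (use L0 in simp)
      then show ?thesis by simp
    qed
    then have "real L * sqrt (1 / (real L - real n)) \<le> theta_c L M C"
      by (rule sqle[OF tc0, rotated 2]) (use nL in simp_all)
    then show ?thesis by (simp add: real_sqrt_divide)
  qed
  show ?thesis using A B by blast
qed

end
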